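(* Let $A,B\in\mathbb D[X]$ both have degree $d$ and valuation $0$, with symmetric subresultants $(S_i)_{-1\le i\le d}$. Fix $\ell\in\{1,\dots,\lfloor d/2\rfloor\}$ and let $(\widehat S_j)_{-1\le j\le 2\ell-1}$ be the symmetric subresultants of $A_{|\ell}$ and $B_{|\ell}$ (polynomials of degree $2\ell-1$, truncated with formal degree $d$). Then for every $1\le j<\ell$, $$S_{j|(\ell-j)}=\widehat S_{j|(\ell-j)},$$ where $S_j$ is truncated as a polynomial of formal degree $d-j$ and $\widehat S_j$ as a polynomial of formal degree $2\ell-1-j$. In particular $S_j(0)=\widehat S_j(0)$ and $\mathrm{co}_{d-j}(S_j)=\mathrm{co}_{2\ell-1-j}(\widehat S_j)$ for $1\le j<\ell$.
   Context: $\mathbb D$ is a subring of $\mathbb C$; $v(P)$ is the largest $v$ with $X^v\mid P$; $\mathrm{co}_k(P)$ is the coefficient of $X^k$. Symmetric subresultants: let $A=\sum_{i=0}^n a_iX^i$, $B=\sum_{i=0}^n b_iX^i$ with $\deg A=n\ge1$ ($B$ of formal degree $n$). Put $a_i=b_i=0$ for $i<0$ or $i>n$. For $1\le j\le n$ and $0\le\ell\le n-j$, let $\mathrm{Sylv}_{j,\ell}$ be the $2j\times 2j$ matrix whose $r$-th row, $1\le r\le j$, is $(a_{1-r},\dots,a_{j-1-r},\ a_{j-r+\ell},\ a_{n+1-r},\dots,a_{n+j-r})$ and whose $(j+r)$-th row is the same with $a$ replaced by $b$. The symmetric subresultants are $S_{-1}=A$, $S_0=B$, $S_j=\sum_{\ell=0}^{n-j}\det(\mathrm{Sylv}_{j,\ell})X^\ell$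 ($1\le j\le n$). Symmetric truncation: for $P=\sum_{i=0}^Dp_iX^i$ regarded as of formal degree $D$ and $m\in\{1,\dots,\lfloor D/2\rfloor\}$, $P_{|m}=p_0+\dots+p_{m-1}X^{m-1}+p_{D-m+1}X^m+\dots+p_DX^{2m-1}$; $P_{|0}=0$; $P_{|m}=P$ for $m>\lfloor D/2\rfloor$. *)

theory Defs
  imports "HOL-Computational_Algebra.Polynomial" "Jordan_Normal_Form.Determinant"
begin

definition is_subring_C :: "complex set \<Rightarrow> bool" where
  "is_subring_C D \<longleftrightarrow> 0 \<in> D \<and> 1 \<in> D \<and> (\<forall>x\<in>D. \<forall>y\<in>D. x + y \<in> D \<and> x - y \<in> D \<and> x * y \<in> D)"

definition val :: "'a::comm_semiring_1 poly \<Rightarrow> nat" where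
  "val P = (GREATEST v. [:0, 1:] ^ v dvd P)"

text \<open>Coefficient with integer index, a_i = 0 for i < 0 or i > n (formal degree n).\<close>
definition cf :: "nat \<Rightarrow> 'a::zero poly \<Rightarrow> int \<Rightarrow> 'a" where
  "cf n P i = (if 0 \<le> i \<and> i \<le> int n then coeff P (nat i) else 0)"

text \<open>Row of Sylv_{j,l} built from polynomial P (formal degree n); r, c are 1-based.\<close>
definition sylv_row :: "nat \<Rightarrow> 'a::zero poly \<Rightarrow> nat \<Rightarrow> nat \<Rightarrow> nat \<Rightarrow> nat \<Rightarrow> 'a" where
  "sylv_row n P j l r c =
     (if c < j then cf n P (int c - int r)
      else if c = j then cf n P (int j - int r + int l)
      else cf n P (int n + int (c - j) - int r))"

text \<open>The 2j x 2j matrix Sylv_{j,l} (0-based indices in Isabelle).\<close>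
definition Sylv :: "nat \<Rightarrow> 'a::zero poly \<Rightarrow> 'a poly \<Rightarrow> nat \<Rightarrow> nat \<Rightarrow> 'a mat" where
  "Sylv n A B j l = mat (2*j) (2*j) (\<lambda>(i, k).
     if i < j then sylv_row n A j l (i + 1) (k + 1)
     else sylv_row n B j l (i - j + 1) (k + 1))"

definition sym_subres :: "nat \<Rightarrow> 'a::comm_ring_1 poly \<Rightarrow> 'a poly \<Rightarrow> int \<Rightarrow> 'a poly" where
  "sym_subres n A B j =
     (if j = -1 then A else if j = 0 then B
      else (\<Sum>l = 0..n - nat j. monom (det (Sylv n A B (nat j) l)) l))"

definition sym_trunc :: "nat \<Rightarrow> nat \<Rightarrow> 'a::comm_semiring_1 poly \<Rightarrow> 'a poly" where
  "sym_trunc D m P =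
     (if m = 0 then 0
      else if m > D div 2 then P
      else (\<Sum>i<m. monom (coeff P i) i) + (\<Sum>i<m. monom (coeff P (D - m + 1 + i)) (m + i)))"

end

theory Submission
  imports Defs
begin

lemma coeff_sym_trunc:
  assumes "0 < m" "m \<le> D div 2"
  shows "coeff (sym_trunc D m P) k =
    (if k < m then coeff P k else if k < 2*m then coeff P (D - m + 1 + (k - m)) else 0)"
proof -
  have e: "sym_trunc D m P = (\<Sum>i<m. monom (coeff P i) i) + (\<Sum>i<m. monom (coeff P (D - m + 1 + i)) (m + i))"
    using assms unfolding sym_trunc_def by auto
  have c1: "coeff (\<Sum>i<m. monom (coeff P i) i) k = (if k < m then coeff P k else 0)"
    by (simp add: coeff_sum coeff_monom)
  have c2: "coeff (\<Sum>i<m. monom (coeff P (D - m + 1 + i)) (m + i)) k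
      = (if m \<le> k \<and> k < 2*m then coeff P (D - m + 1 + (k - m)) else 0)"
  proof -
    have "coeff (\<Sum>i<m. monom (coeff P (D - m + 1 + i)) (m + i)) k
       = (\<Sum>i<m. if i = k - m \<and> m \<le> k then coeff P (D - m + 1 + i) else 0)"
      unfolding coeff_sum coeff_monom by (intro sum.cong) auto
    also have "\<dots> = (if m \<le> k \<and> k < 2*m then coeff P (D - m + 1 + (k - m)) else 0)"
      by (cases "m \<le> k") (auto simp: sum.delta' cong: if_cong)
    finally show ?thesis .
  qed
  show ?thesis unfolding e coeff_add c1 c2 by auto
qed

lemma coeff_sym_subres:
  assumes "1 \<le> j"
  shows "coeff (sym_subres n A B (int j)) k = (if k \<le> n - j then det (Sylv n A B j k) else 0)"
proof -
  have "sym_subres n A B (int j) = (\<Sum>l = 0..n - j. monom (det (Sylv n A B j l)) l)"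
    using assms unfolding sym_subres_def by auto
  then show ?thesis by (simp add: coeff_sum coeff_monom)
qed

lemma cf_eq: "cf n P i = (if 0 \<le> i \<and> i \<le> int n then coeff P (nat i) else 0)"
  by (simp add: cf_def)

lemma row_eq:
  assumes "1 \<le> l" "2*l \<le> d" "j < l" "1 \<le> r" "r \<le> j" "1 \<le> c" "c \<le> 2*j"
    and "k < l - j \<and> k' = k \<or> (\<exists>i. i < l - j \<and> k = d - l + 1 + i \<and> k' = l + i)"
  shows "sylv_row d P j k r c = sylv_row (2*l-1) (sym_trunc d l P) j k' r c"
proof -
  have l2: "l \<le> d div 2" using assms by auto
  have ct: "\<And>k. coeff (sym_trunc d l P) k =
    (if k < l then coeff P k else if k < 2*l then coeff P (d - l + 1 + (k - l)) else 0)"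
    using coeff_sym_trunc[OF _ l2, of P] assms(1) by auto
  consider (lo) "c < j" | (mid) "c = j" | (hi) "j < c" by linarith
  then show ?thesis
  proof cases
    case lo
    show ?thesis
    proof (cases "r \<le> c")
      case True
      obtain x where x: "x = c - r" by blast
      have i1: "int c - int r = int x" using True x by simp
      have xs: "x < l" "x \<le> d" "x \<le> 2*l-1" using assms(1-7) lo x by auto
      have "sylv_row d P j k r c = coeff P x"
        unfolding sylv_row_def cf_eq i1 using lo xs by simp
      moreover have "sylv_row (2*l-1) (sym_trunc d l P) j k' r c = coeff P x"
        unfolding sylv_row_def cf_eq i1 using lo xs by (simp add: ct)
      ultimately show ?thesis by simp
    next
      case False
      then show ?thesis using lo unfolding sylv_row_def cf_eq by simp
    qed
  next
    case mid
    from assms(8) show ?thesis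
    proof
      assume h: "k < l - j \<and> k' = k"
      obtain x where x: "x = j - r + k" by blast
      have xs: "x < l" "x \<le> d" "x \<le> 2*l-1" using assms(1-7) h x by auto
      have i1: "int j - int r + int k = int x" using x assms(5) by simp
      have i2: "int j - int r + int k' = int x" using x h assms(5) by simp
      have "sylv_row d P j k r c = coeff P x"
        unfolding sylv_row_def cf_eq i1 using mid xs by simp
      moreover have "sylv_row (2*l-1) (sym_trunc d l P) j k' r c = coeff P x"
        unfolding sylv_row_def cf_eq i2 using mid xs by (simp add: ct)
      ultimately show ?thesis by simp
    next
      assume "\<exists>i. i < l - j \<and> k = d - l + 1 + i \<and> k' = l + i"
      then obtain i where h: "i < l - j" "k = d - l + 1 + i" "k' = l + i" by blast
      obtain x where x: "x = j - r + k" by blast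
      obtain y where y: "y = j - r + k'" by blast
      have i1: "int j - int r + int k = int x" using x assms(5) by simp
      have i2: "int j - int r + int k' = int y" using y assms(5) by simp
      have a: "x \<le> d" "y \<le> 2*l-1" "\<not> y < l" "y < 2*l"
        using assms(1-7) h x y by auto
      have b: "d - l + 1 + (y - l) = x" using assms(1-7) h x y by auto
      have "sylv_row d P j k r c = coeff P x"
        unfolding sylv_row_def cf_eq i1 using mid a by simp
      moreover have "sylv_row (2*l-1) (sym_trunc d l P) j k' r c = coeff P x"
        unfolding sylv_row_def cf_eq i2 using mid a by (simp add: ct flip: b)
      ultimately show ?thesis by simp
    qed
  next
    case hi
    define q where "q = c - j"
    have q: "c = j + q" "1 \<le> q" "q \<le> j" using assms(7) hi unfolding q_def by linarith+
    have cq: "c - j = q" using q by simp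
    show ?thesis
    proof (cases "q \<le> r")
      case True
      obtain x where x: "x = d + q - r" by blast
      obtain y where y: "y = 2*l - 1 + q - r" by blast
      have rr: "r \<le> d + q" "r \<le> 2*l - 1 + q" using assms(1-7) by linarith+
      have i1: "int d + int q - int r = int x" using rr x by (simp add: of_nat_diff)
      have i2: "int (2*l-1) + int q - int r = int y" using rr y assms(1) by (simp add: of_nat_diff)
      have a: "x \<le> d" "y \<le> 2*l-1" "\<not> y < l" "y < 2*l"
        using True assms(1-7) q x y by auto
      have b: "d - l + 1 + (y - l) = x" using True assms(1-7) q x y by auto
      have "sylv_row d P j k r c = coeff P x"
        unfolding sylv_row_def cf_eq cq i1 using hi a by simp
      moreover have "sylv_row (2*l-1) (sym_trunc d l P) j k' r c = coeff P x"
        unfolding sylv_row_def cf_eq cq i2 using hi a by (simp add: ct flip: b)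
      ultimately show ?thesis by simp
    next
      case False
      have "int d + int q - int r > int d" "int (2*l-1) + int q - int r > int (2*l-1)"
        using False by auto
      then show ?thesis using hi unfolding sylv_row_def cf_eq cq by simp
    qed
  qed
qed

lemma sylv_eq:
  assumes "1 \<le> l" "2*l \<le> d" "j < l"
    and "k < l - j \<and> k' = k \<or> (\<exists>i. i < l - j \<and> k = d - l + 1 + i \<and> k' = l + i)"
  shows "Sylv d A B j k = Sylv (2*l-1) (sym_trunc d l A) (sym_trunc d l B) j k'"
  unfolding Sylv_def
proof (rule eq_matI)
  fix i c assume i: "i < dim_row (mat (2*j) (2*j) (\<lambda>(i, c). if i < j then sylv_row (2*l-1) (sym_trunc d l A) j k' (i + 1) (c + 1)
            else sylv_row (2*l-1) (sym_trunc d l B) j k' (i - j + 1) (c + 1)))"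
    and c: "c < dim_col (mat (2*j) (2*j) (\<lambda>(i, c). if i < j then sylv_row (2*l-1) (sym_trunc d l A) j k' (i + 1) (c + 1)
            else sylv_row (2*l-1) (sym_trunc d l B) j k' (i - j + 1) (c + 1)))"
  then have i': "i < 2*j" and c': "c < 2*j" by auto
  show "mat (2*j) (2*j) (\<lambda>(i, c). if i < j then sylv_row d A j k (i + 1) (c + 1)
            else sylv_row d B j k (i - j + 1) (c + 1)) $$ (i, c) =
        mat (2*j) (2*j) (\<lambda>(i, c). if i < j then sylv_row (2*l-1) (sym_trunc d l A) j k' (i + 1) (c + 1)
            else sylv_row (2*l-1) (sym_trunc d l B) j k' (i - j + 1) (c + 1)) $$ (i, c)"
  proof (cases "i < j")
    case True
    then show ?thesis using i' c' row_eq[OF assms(1-3), of "i+1" "c+1" k k' A] assms(4) by simp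
  next
    case False
    then show ?thesis using i' c' row_eq[OF assms(1-3), of "i-j+1" "c+1" k k' B] assms(4) by simp
  qed
qed auto

theorem lemma8:
  fixes D :: "complex set" and A B :: "complex poly" and d l j :: nat
  assumes "is_subring_C D"
    and "\<forall>i. coeff A i \<in> D" and "\<forall>i. coeff B i \<in> D"
    and "degree A = d" and "degree B = d"
    and "val A = 0" and "val B = 0"
    and "1 \<le> l" and "l \<le> d div 2"
    and "1 \<le> j" and "j < l"
  shows "sym_trunc (d - j) (l - j) (sym_subres d A B (int j))
           = sym_trunc (2*l - 1 - j) (l - j)
               (sym_subres (2*l - 1) (sym_trunc d l A) (sym_trunc d l B) (int j))
       \<and> poly (sym_subres d A B (int j)) 0
           = poly (sym_subres (2*l - 1) (sym_trunc d l A) (sym_trunc d l B) (int j)) 0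
       \<and> coeff (sym_subres d A B (int j)) (d - j)
           = coeff (sym_subres (2*l - 1) (sym_trunc d l A) (sym_trunc d l B) (int j)) (2*l - 1 - j)"
proof -
  define S where "S = sym_subres d A B (int j)"
  define T where "T = sym_subres (2*l - 1) (sym_trunc d l A) (sym_trunc d l B) (int j)"
  have d2: "2*l \<le> d" using assms by auto
  have m1: "0 < l - j" "l - j \<le> (d - j) div 2" "l - j \<le> (2*l - 1 - j) div 2" using assms by auto
  have cS: "coeff S k = (if k \<le> d - j then det (Sylv d A B j k) else 0)" for k
    unfolding S_def using coeff_sym_subres assms(10) by blast
  have cT: "coeff T k = (if k \<le> 2*l-1 - j then det (Sylv (2*l-1) (sym_trunc d l A) (sym_trunc d l B) j k) else 0)" for k
    unfolding T_def using coeff_sym_subres assms(10) by blast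
  have low: "coeff S k = coeff T k" if "k < l - j" for k
  proof -
    have "Sylv d A B j k = Sylv (2*l-1) (sym_trunc d l A) (sym_trunc d l B) j k"
      by (rule sylv_eq) (use assms d2 that in auto)
    then show ?thesis using that d2 unfolding cS cT by auto
  qed
  have high: "coeff S (d - j - (l - j) + 1 + i) = coeff T (2*l - 1 - j - (l - j) + 1 + i)" if "i < l - j" for i
  proof -
    have e1: "d - j - (l - j) + 1 + i = d - l + 1 + i" and e2: "2*l - 1 - j - (l - j) + 1 + i = l + i"
      using assms d2 by auto
    have "Sylv d A B j (d - l + 1 + i) = Sylv (2*l-1) (sym_trunc d l A) (sym_trunc d l B) j (l + i)"
      by (rule sylv_eq) (use assms d2 that in auto)
    moreover have "d - l + 1 + i \<le> d - j" "l + i \<le> 2*l-1-j" using that assms d2 by auto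
    ultimately show ?thesis unfolding e1 e2 cS cT by auto
  qed
  have tr: "sym_trunc (d - j) (l - j) S = sym_trunc (2*l - 1 - j) (l - j) T"
  proof (rule poly_eqI)
    fix k
    show "coeff (sym_trunc (d - j) (l - j) S) k = coeff (sym_trunc (2*l - 1 - j) (l - j) T) k"
      unfolding coeff_sym_trunc[OF m1(1) m1(2)] coeff_sym_trunc[OF m1(1) m1(3)]
      using low high[of "k - (l - j)"] by auto
  qed
  have p0: "poly S 0 = poly T 0"
    using low[of 0] m1 by (simp add: poly_0_coeff_0)
  have top: "coeff S (d - j) = coeff T (2*l - 1 - j)"
  proof -
    have e: "d - j - (l - j) + 1 + (l - j - 1) = d - j" "2*l - 1 - j - (l - j) + 1 + (l - j - 1) = 2*l-1-j"
      using assms d2 by auto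
    have h: "coeff S (d - j - (l - j) + 1 + (l - j - 1)) = coeff T (2*l - 1 - j - (l - j) + 1 + (l - j - 1))"
      by (rule high) (use assms in auto)
    then show ?thesis by (simp only: e)
  qed
  show ?thesis using tr p0 top unfolding S_def T_def by blast
qed

end
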